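(* Under the standing assumptions, let $u^0\in\operatorname{dom}(J)$ with $|u^0|_H=1$, and let sequences $(u^k)$, $(u^{k+1/2})$, $(\zeta^k)$ be generated by the inverse power method $$\zeta^k\in\partial H(u^k),\qquad u^{k+1/2}\in\partial J^*(\zeta^k),\qquad u^{k+1}=\frac{u^{k+1/2}}{|u^{k+1/2}|_H},$$ where it is assumed that each step is well defined and $u^{k+1/2}\ne0$ for all $k$. Then $R_*(\zeta^k)\le R_*(\zeta^{k+1})$ for all $k\in\mathbb N$. (No homogeneity of $J$ is required.)
   Context: Standing assumptions: $X$ is a real reflexive Banach space with dual $X^*$ and duality pairing $\langle\cdot,\cdot\rangle$; $\Gamma_0(X)$ is the class of proper, lower semi-continuous, convex functionals $X\to\mathbb{R}\cup\{+\infty\}$. Fix $1<p<\infty$ and $q=\frac{p}{p-1}$. Let $J\in\Gamma_0(X)$, and let $H\in\Gamma_0(X)$ be absolutely $p$-homogeneous ($H(tu)=|t|^pH(u)$) such that $|u|_H:=(pH(u))^{1/p}$ is a norm on $X$, so $H(u)=\frac1p|u|_H^p$. The dual norm is $|\zeta|_{H^*}=\sup_{u\ne0}\langle\zeta,u\rangle/|u|_H$, and $H^*(\zeta)=\frac1q|\zeta|_{H^*}^q$. The Fenchel conjugate is $J^*(\zeta)=\sup_{u\in X}\langle\zeta,u\rangle-J(u)$ and the subdifferential is $\partial J(u)=\{\zeta\in X^*:\ J(u)+\langle\zeta,v-u\rangle\le J(v)\ \forall v\in X\}$. Growth assumption: there is $c>0$ with $H(u)\le cJ(u)$ for all $u\in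 X$. The dual Rayleigh quotient is $R_*(\zeta)=J^*(\zeta)/H^*(\zeta)$ for $\zeta\ne0$. $\operatorname{dom}(J)=\{u:J(u)<\infty\}$. *)

theory Defs
  imports "HOL-Analysis.Analysis"
begin

text \<open>Dual space X* is modelled by continuous linear functionals 'a \<Rightarrow>L real;
the duality pairing is application. Extended-real valued functionals use ereal.\<close>

definition reflexive_space :: "'a::banach itself \<Rightarrow> bool" where
  "reflexive_space _ \<longleftrightarrow>
     (\<forall>\<phi> :: ('a \<Rightarrow>\<^sub>L real) \<Rightarrow>\<^sub>L real. \<exists>x::'a. \<forall>\<zeta>. blinfun_apply \<phi> \<zeta> = blinfun_apply \<zeta> x)"

definition proper_fun :: "('b \<Rightarrow> ereal) \<Rightarrow> bool" where
  "proper_fun f \<longleftrightarrow> (\<forall>x. f x \<noteq> -\<infinity>) \<and> (\<exists>x. f x \<noteq> \<infinity>)"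

definition convex_fun :: "('b::real_vector \<Rightarrow> ereal) \<Rightarrow> bool" where
  "convex_fun f \<longleftrightarrow> (\<forall>x y t. 0 \<le> t \<and> t \<le> 1 \<longrightarrow>
      f ((1 - t) *\<^sub>R x + t *\<^sub>R y) \<le> ereal (1 - t) * f x + ereal t * f y)"

definition lsc_fun :: "('b::metric_space \<Rightarrow> ereal) \<Rightarrow> bool" where
  "lsc_fun f \<longleftrightarrow> (\<forall>x X. X \<longlonglongrightarrow> x \<longrightarrow> f x \<le> liminf (\<lambda>n. f (X n)))"

definition Gamma0 :: "('b::real_normed_vector \<Rightarrow> ereal) \<Rightarrow> bool" where
  "Gamma0 f \<longleftrightarrow> proper_fun f \<and> lsc_fun f \<and> convex_fun f"

definition is_norm :: "('b::real_vector \<Rightarrow> real) \<Rightarrow> bool" where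
  "is_norm N \<longleftrightarrow> (\<forall>x. 0 \<le> N x) \<and> (\<forall>x. N x = 0 \<longleftrightarrow> x = 0) \<and>
     (\<forall>x y. N (x + y) \<le> N x + N y) \<and> (\<forall>t x. N (t *\<^sub>R x) = \<bar>t\<bar> * N x)"

definition fconj :: "('a::real_normed_vector \<Rightarrow> ereal) \<Rightarrow> ('a \<Rightarrow>\<^sub>L real) \<Rightarrow> ereal" where
  "fconj J \<zeta> = (SUP u. ereal (blinfun_apply \<zeta> u) - J u)"

definition subdiff :: "('a::real_normed_vector \<Rightarrow> ereal) \<Rightarrow> 'a \<Rightarrow> ('a \<Rightarrow>\<^sub>L real) set" where
  "subdiff J u = {\<zeta>. \<forall>v. J u + ereal (blinfun_apply \<zeta> (v - u)) \<le> J v}"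

text \<open>Subdifferential of a functional on X*, viewed in X via reflexivity
  (X** identified with X through the canonical embedding).\<close>
definition subdiff_dual :: "(('a::real_normed_vector \<Rightarrow>\<^sub>L real) \<Rightarrow> ereal) \<Rightarrow> ('a \<Rightarrow>\<^sub>L real) \<Rightarrow> 'a set" where
  "subdiff_dual G \<zeta> = {u. \<forall>\<eta>. G \<zeta> + ereal (blinfun_apply (\<eta> - \<zeta>) u) \<le> G \<eta>}"

definition dual_rayleigh :: "('a::real_normed_vector \<Rightarrow> ereal) \<Rightarrow> ('a \<Rightarrow> ereal) \<Rightarrow> ('a \<Rightarrow>\<^sub>L real) \<Rightarrow> ereal" where
  "dual_rayleigh J H \<zeta> = fconj J \<zeta> / fconj H \<zeta>"

end

theory Submission
  imports Defs
begin

lemma L1: fixes x p :: real assumes "0 \<le> x" "0 < p" "x powr (1/p) = 1" shows "x = 1"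
proof -
  have "x \<noteq> 0" using assms by auto
  then have "x > 0" using assms by auto
  have "(x powr (1/p)) powr p = x powr ((1/p)*p)" by (rule powr_powr)
  also have "\<dots> = x" using \<open>x>0\<close> assms by simp
  finally show ?thesis using assms by simp
qed

lemma L2: fixes a p :: real assumes p: "1 < p" and h: "\<forall>t>0. (t-1)*a \<le> (t powr p - 1)/p"
  shows "a = 1"
proof -
  define f where "f = (\<lambda>t::real. (t powr p - 1)/p - (t-1)*a)"
  have d: "(f has_real_derivative (1 - a)) (at 1)"
    unfolding f_def using p
    by (auto intro!: derivative_eq_intros)
  have "1 - a = 0"
  proof (rule DERIV_local_min[OF d, of 1])
    show "\<forall>y. \<bar>1 - y\<bar> < 1 \<longrightarrow> f 1 \<le> f y"
    proof (intro allI impI)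
      fix y :: real assume "\<bar>1 - y\<bar> < 1"
      then have "y > 0" by auto
      then show "f 1 \<le> f y" using h unfolding f_def by auto
    qed
  qed auto
  then show ?thesis by simp
qed

theorem lemma3p1:
  fixes J :: "'a::banach \<Rightarrow> ereal" and H :: "'a \<Rightarrow> real" and p c :: real
    and u uh :: "nat \<Rightarrow> 'a" and \<zeta> :: "nat \<Rightarrow> ('a \<Rightarrow>\<^sub>L real)"
  assumes refl: "reflexive_space TYPE('a)"
    and p: "1 < p"
    and J: "Gamma0 J"
    and H: "Gamma0 (\<lambda>x. ereal (H x))"
    and Hhom: "\<forall>t x. H (t *\<^sub>R x) = \<bar>t\<bar> powr p * H x"
    and Hnorm: "is_norm (\<lambda>x. (p * H x) powr (1 / p))"
    and growth: "0 < c" "\<forall>x. ereal (H x) \<le> ereal c * J x"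
    and u0dom: "J (u 0) \<noteq> \<infinity>"
    and u0norm: "(p * H (u 0)) powr (1 / p) = 1"
    and zeta: "\<forall>k. \<zeta> k \<in> subdiff (\<lambda>x. ereal (H x)) (u k)"
    and uh: "\<forall>k. uh k \<in> subdiff_dual (fconj J) (\<zeta> k)"
    and uh_nz: "\<forall>k. uh k \<noteq> 0"
    and step: "\<forall>k. u (Suc k) = (1 / (p * H (uh k)) powr (1 / p)) *\<^sub>R uh k"
  shows "\<forall>k. dual_rayleigh J (\<lambda>x. ereal (H x)) (\<zeta> k)
             \<le> dual_rayleigh J (\<lambda>x. ereal (H x)) (\<zeta> (Suc k))"
  proof -
  define N where "N = (\<lambda>x. (p * H x) powr (1 / p))"
  have p0: "0 < p" using p by simp
  have H0: "H 0 = 0" using Hhom[rule_format, of 0 0] p by simp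
  have Hneg: "H (- x) = H x" for x using Hhom[rule_format, of "-1" x] by simp
  have Hnn: "0 \<le> H x" for x
  proof -
    have "ereal (H ((1 - 1/2) *\<^sub>R x + (1/2) *\<^sub>R (-x))) \<le> ereal (1 - 1/2) * ereal (H x) + ereal (1/2) * ereal (H (-x))"
    proof -
      have cv: "convex_fun (\<lambda>x. ereal (H x))" using H unfolding Gamma0_def by blast
      show ?thesis using cv unfolding convex_fun_def by (rule allE[of _ x]) (erule allE[of _ "-x"], erule allE[of _ "1/2"], simp)
    qed
    moreover have "(1 - 1/2) *\<^sub>R x + (1/2) *\<^sub>R (-x) = (0::'a)" by (simp add: scaleR_left_diff_distrib)
    ultimately show ?thesis using H0 Hneg by simp
  qed
  have Nhom: "N (t *\<^sub>R x) = \<bar>t\<bar> * N x" for t x using Hnorm unfolding is_norm_def N_def by blast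
  have Npos: "x \<noteq> 0 \<Longrightarrow> 0 < N x" for x using Hnorm unfolding is_norm_def N_def
    by (metis order_le_less)
  have one: "N x = 1 \<Longrightarrow> p * H x = 1" for x
    using L1[of "p * H x" p] Hnn[of x] p0 unfolding N_def by simp
  have unorm: "p * H (u k) = 1" for k
  proof (cases k)
    case 0 then show ?thesis using one u0norm unfolding N_def by simp
  next
    case (Suc j)
    have "N (uh j) > 0" using Npos uh_nz by blast
    moreover have "u (Suc j) = (1 / N (uh j)) *\<^sub>R uh j" using step unfolding N_def by simp
    ultimately have "N (u (Suc j)) = 1" using Nhom by simp
    then show ?thesis using one Suc by simp
  qed
  have Hu1: "H (u k) = 1/p" for k
  proof -
    show ?thesis using unorm[of k] p0 by (simp add: eq_divide_eq mult.commute)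
  qed
  have sub: "H (u k) + blinfun_apply (\<zeta> k) (v - u k) \<le> H v" for k v
    using zeta unfolding subdiff_def by auto
  have zu: "blinfun_apply (\<zeta> k) (u k) = 1" for k
  proof -
    have "\<forall>t>0. (t-1) * blinfun_apply (\<zeta> k) (u k) \<le> (t powr p - 1)/p"
    proof (intro allI impI)
      fix t :: real assume t: "t > 0"
      have "H (u k) + blinfun_apply (\<zeta> k) (t *\<^sub>R u k - u k) \<le> H (t *\<^sub>R u k)" by (rule sub)
      moreover have "H (t *\<^sub>R u k) = t powr p * H (u k)" using Hhom t by simp
      moreover have "blinfun_apply (\<zeta> k) (t *\<^sub>R u k - u k) = (t - 1) * blinfun_apply (\<zeta> k) (u k)"
        by (simp add: blinfun.diff_right blinfun.scaleR_right algebra_simps)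
      moreover have "H (u k) = 1/p" by (rule Hu1)
      ultimately have "1/p + (t-1) * blinfun_apply (\<zeta> k) (u k) \<le> t powr p * (1/p)" by simp
      then show "(t-1) * blinfun_apply (\<zeta> k) (u k) \<le> (t powr p - 1)/p"
        by (simp add: diff_divide_distrib)
    qed
    then show ?thesis using L2 p by blast
  qed
  have zbound: "blinfun_apply (\<zeta> k) v \<le> N v" for k v
  proof (cases "v = 0")
    case True then show ?thesis using Hnorm unfolding is_norm_def N_def by simp
  next
    case False
    then have Nv: "N v > 0" using Npos by blast
    define w where "w = (1 / N v) *\<^sub>R v"
    have "N w = 1" using Nv Nhom unfolding w_def by simp
    then have Hw: "p * H w = 1" using one by blast
    have "H (u k) + blinfun_apply (\<zeta> k) (w - u k) \<le> H w" by (rule sub)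
    then have "blinfun_apply (\<zeta> k) w \<le> 1"
    proof -
      have "p * H w = p * H (u k)" using Hw unorm[of k] by simp
      then have "H w = H (u k)" using p0 by simp
      then show ?thesis using \<open>H (u k) + blinfun_apply (\<zeta> k) (w - u k) \<le> H w\<close> zu[of k]
        by (simp add: blinfun.diff_right)
    qed
    moreover have "blinfun_apply (\<zeta> k) w = blinfun_apply (\<zeta> k) v / N v"
      unfolding w_def by (simp add: blinfun.scaleR_right)
    ultimately show ?thesis using Nv by (simp add: divide_le_eq)
  qed
  have Hconj: "fconj (\<lambda>x. ereal (H x)) (\<zeta> k) = ereal (1 - 1/p)" for k
    unfolding fconj_def
  proof (rule antisym)
    show "(SUP v. ereal (blinfun_apply (\<zeta> k) v) - ereal (H v)) \<le> ereal (1 - 1 / p)"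
    proof (rule SUP_least)
      fix v
      have "H (u k) + blinfun_apply (\<zeta> k) (v - u k) \<le> H v" by (rule sub)
      then have "blinfun_apply (\<zeta> k) v - H v \<le> 1 - 1/p"
        using Hu1[of k] zu[of k] by (simp add: blinfun.diff_right)
      then show "ereal (blinfun_apply (\<zeta> k) v) - ereal (H v) \<le> ereal (1 - 1 / p)" by simp
    qed
    have "ereal (1 - 1/p) = ereal (blinfun_apply (\<zeta> k) (u k)) - ereal (H (u k))"
      using Hu1[of k] zu[of k] by simp
    also have "\<dots> \<le> (SUP v. ereal (blinfun_apply (\<zeta> k) v) - ereal (H v))"
      by (rule SUP_upper) simp
    finally show "ereal (1 - 1/p) \<le> (SUP v. ereal (blinfun_apply (\<zeta> k) v) - ereal (H v))" .
  qed
  show ?thesis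
  proof
    fix k
    have Nuh: "N (uh k) > 0" using Npos uh_nz by blast
    have "u (Suc k) = (1 / N (uh k)) *\<^sub>R uh k" using step unfolding N_def by simp
    then have ueq: "uh k = N (uh k) *\<^sub>R u (Suc k)" using Nuh by simp
    have a: "blinfun_apply (\<zeta> (Suc k)) (uh k) = N (uh k)"
      by (subst ueq) (simp add: blinfun.scaleR_right zu)
    have b: "blinfun_apply (\<zeta> k) (uh k) \<le> N (uh k)" by (rule zbound)
    have d: "0 \<le> blinfun_apply (\<zeta> (Suc k) - \<zeta> k) (uh k)"
      using a b by (simp add: blinfun.diff_left)
    have e: "fconj J (\<zeta> k) + ereal (blinfun_apply (\<zeta> (Suc k) - \<zeta> k) (uh k)) \<le> fconj J (\<zeta> (Suc k))"
      using uh unfolding subdiff_dual_def by blast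
    have g: "fconj J (\<zeta> k) \<le> fconj J (\<zeta> k) + ereal (blinfun_apply (\<zeta> (Suc k) - \<zeta> k) (uh k))"
      using d by (cases "fconj J (\<zeta> k)") auto
    have f: "fconj J (\<zeta> k) \<le> fconj J (\<zeta> (Suc k))" by (rule order_trans[OF g e])
    have "0 < ereal (1 - 1/p)" using p by simp
    then show "dual_rayleigh J (\<lambda>x. ereal (H x)) (\<zeta> k) \<le> dual_rayleigh J (\<lambda>x. ereal (H x)) (\<zeta> (Suc k))"
      unfolding dual_rayleigh_def Hconj using f by (rule ereal_divide_right_mono[rotated])
  qed
qed

end
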